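(* Let $x\in J$ and let $\{I_i\}_{i\in F}$ be an $x$-norming family. Then: (1) $\mathrm{supp}(x)\subset\bigcup_{i\in F}I_i$. (2) For every subinterval $G$ of $F$, $\sum_{i\in G}|\sum_{n\in I_i}x(n)|^2=\|x|_{\bigcup_{i\in G}I_i}\|_J^2$. (3) For every $i\in F$ and $n\in I_i\cap\mathrm{supp}(x)$, the numbers $\sum_{m\in I_i}x(m)$, $\sum_{m\in I_i,\,m\le n}x(m)$ and $\sum_{m\in I_i,\,m\ge n}x(m)$ are all nonzero and have the same sign. (4) For every $i\in F$ with $i+1\in F$, $\sum_{m\in I_i}x(m)$ and $\sum_{m\in I_{i+1}}x(m)$ have opposite signs. (5) Let $i\in F$. If $n_1<n_2$ are consecutive elements of $\mathrm{supp}(x)$ with $x(n_1)x(n_2)>0$, then either $\{n_1,n_2\}\subset I_i$ or $\{n_1,n_2\}\cap I_i=\emptyset$.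
   Context: For a real sequence $x=(x(n))_{n\in\mathbb N}$ let $\|x\|_J=\sup\bigl(\sum_{i=1}^n|\sum_{k\in I_i}x(k)|^2\bigr)^{1/2}$ over all $n$ and all families of pairwise disjoint intervals $I_1,\dots,I_n$ of $\mathbb N$ (intervals: nonempty sets of consecutive positive integers, possibly infinite). $J=\{x:\|x\|_J<\infty\}$; for $x\in J$ and any interval $I$ the series $\sum_{k\in I}x(k)$ converges. $\mathrm{supp}(x)=\{n:x(n)\ne0\}$; for $A\subset\mathbb N$, $x|_A$ is the sequence equal to $x$ on $A$ and $0$ off $A$. A family of intervals $\mathcal I=\{I_i\}_{i\in F}$: $F=\{1,\dots,k\}$ or $F=\mathbb N$, each $I_i$ an interval, $\max I_i<\min I_{i+1}$ whenever $i+1\in F$; $\|x\|_{\mathcal I}=(\sum_{i\in F}|\sum_{k\in I_i}x(k)|^2)^{1/2}$; it is $x$-norming if $\|x\|_{\mathcal I}=\|x\|_J$. *)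

theory Defs
  imports "HOL-Analysis.Analysis"
begin

text \<open>Sequences are functions nat => real; only positive indices matter
  (the value at 0 is never used: intervals consist of positive integers and
  the support only contains positive integers).\<close>

definition nat_interval :: "nat set \<Rightarrow> bool" where
  "nat_interval I \<longleftrightarrow> I \<noteq> {} \<and> (\<forall>n\<in>I. 0 < n) \<and>
     (\<forall>a\<in>I. \<forall>c\<in>I. \<forall>b. a \<le> b \<and> b \<le> c \<longrightarrow> b \<in> I)"

definition isum :: "(nat \<Rightarrow> real) \<Rightarrow> nat set \<Rightarrow> real" where
  "isum x I = lim (\<lambda>N. \<Sum>k\<in>I \<inter> {..<N}. x k)"

definition Jvals :: "(nat \<Rightarrow> real) \<Rightarrow> real set" where
  "Jvals x = {(\<Sum>I\<in>\<I>. (isum x I)\<^sup>2) | \<I>. finite \<I> \<and> (\<forall>I\<in>\<I>. nat_interval I)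
               \<and> pairwise disjnt \<I>}"

definition inJ :: "(nat \<Rightarrow> real) \<Rightarrow> bool" where
  "inJ x \<longleftrightarrow> bdd_above (Jvals x)"

definition Jnorm :: "(nat \<Rightarrow> real) \<Rightarrow> real" where
  "Jnorm x = sqrt (Sup (Jvals x))"

definition supp :: "(nat \<Rightarrow> real) \<Rightarrow> nat set" where
  "supp x = {n. 0 < n \<and> x n \<noteq> 0}"

definition restr :: "(nat \<Rightarrow> real) \<Rightarrow> nat set \<Rightarrow> (nat \<Rightarrow> real)" where
  "restr x A = (\<lambda>n. if n \<in> A then x n else 0)"

definition interval_family :: "(nat \<Rightarrow> nat set) \<Rightarrow> nat set \<Rightarrow> bool" where
  "interval_family I F \<longleftrightarrow>
     (F = {1..} \<or> (\<exists>k\<ge>1. F = {1..k})) \<and>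
     (\<forall>i\<in>F. nat_interval (I i)) \<and>
     (\<forall>i. i \<in> F \<and> i + 1 \<in> F \<longrightarrow> (\<forall>a\<in>I i. \<forall>b\<in>I (i + 1). a < b))"

definition fam_norm :: "(nat \<Rightarrow> real) \<Rightarrow> (nat \<Rightarrow> nat set) \<Rightarrow> nat set \<Rightarrow> real" where
  "fam_norm x I F = sqrt (\<Sum>\<^sub>\<infinity>i\<in>F. (isum x (I i))\<^sup>2)"

definition norming :: "(nat \<Rightarrow> real) \<Rightarrow> (nat \<Rightarrow> nat set) \<Rightarrow> nat set \<Rightarrow> bool" where
  "norming x I F \<longleftrightarrow> interval_family I F \<and>
     (\<lambda>i. (isum x (I i))\<^sup>2) summable_on F \<and> fam_norm x I F = Jnorm x"

end

theory Submission
  imports Defs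
begin

lemma restr_sum: "(\<Sum>k\<in>A \<inter> {..<N}. x k) = (\<Sum>k<N. restr x A k)"
  unfolding restr_def by (simp add: sum.If_cases Int_commute)

lemma isum_eq: "isum x A = lim (\<lambda>N. \<Sum>k<N. restr x A k)"
  unfolding isum_def restr_sum ..

lemma isum_cong: "restr x A = restr y B \<Longrightarrow> isum x A = isum y B"
  by (simp add: isum_eq)

lemma isum_suminf: "summable (restr x A) \<Longrightarrow> isum x A = suminf (restr x A)"
  unfolding isum_eq by (rule limI, rule summable_LIMSEQ)

lemma restr_finite_sums: "finite A \<Longrightarrow> restr x A sums sum x A"
proof -
  assume "finite A"
  then have "restr x A sums sum (restr x A) A"
    by (intro sums_finite) (auto simp: restr_def)
  then show ?thesis by (simp add: restr_def)
qed

lemma isum_finite: "finite A \<Longrightarrow> isum x A = sum x A"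
  using restr_finite_sums isum_suminf sums_summable sums_unique by metis

lemma isum_empty[simp]: "isum x {} = 0"
  using isum_finite by simp

lemma restr_restr: "restr (restr x U) K = restr x (K \<inter> U)"
  by (auto simp: restr_def)

lemma summable_interval:
  assumes J: "inJ x" and I: "nat_interval I"
  shows "summable (restr x I)"
proof (rule ccontr)
  assume "\<not> summable (restr x I)"
  then obtain e :: real where e: "e > 0" and H: "\<And>N. \<exists>m\<ge>N. \<exists>n. \<not> \<bar>sum (restr x I) {m..<n}\<bar> < e"
    unfolding summable_Cauchy by (auto simp: not_less)
  have claim: "\<exists>\<K>. finite \<K> \<and> card \<K> = k \<and> (\<forall>K\<in>\<K>. nat_interval K \<and> K \<subseteq> {M..} \<and> e\<^sup>2 \<le> (isum x K)\<^sup>2) \<and> pairwise disjnt \<K>" for k M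
  proof (induction k arbitrary: M)
    case 0
    show ?case by (intro exI[of _ "{}"]) auto
  next
    case (Suc k)
    obtain m n where m: "m \<ge> Suc M" and mn: "\<not> \<bar>sum (restr x I) {m..<n}\<bar> < e" using H by blast
    define B where "B = I \<inter> {m..<n}"
    have sB: "sum (restr x I) {m..<n} = sum x B"
      unfolding B_def restr_def using sum.inter_restrict[of "{m..<n}" x I] by (simp add: Int_commute)
    have Bne: "B \<noteq> {}" using mn e sB by auto
    have Bint: "nat_interval B" using I Bne unfolding nat_interval_def B_def by auto
    have Be: "e\<^sup>2 \<le> (isum x B)\<^sup>2"
      using mn sB isum_finite[of B x] e unfolding B_def
      by (simp add: abs_le_square_iff[symmetric])
    obtain \<K> where K: "finite \<K>" "card \<K> = k" "\<forall>K\<in>\<K>. nat_interval K \<and> K \<subseteq> {n..} \<and> e\<^sup>2 \<le> (isum x K)\<^sup>2" "pairwise disjnt \<K>"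
      using Suc.IH[of n] by blast
    have Bsub: "B \<subseteq> {M..<n}" using m unfolding B_def by auto
    have Mn: "M \<le> n" using Bne m unfolding B_def by auto
    have notin: "B \<notin> \<K>" using K(3) Bsub Bne by fastforce
    have disj: "\<forall>K\<in>\<K>. disjnt B K \<and> disjnt K B" using K(3) Bsub unfolding disjnt_def by fastforce
    show ?case
      apply (rule exI[of _ "insert B \<K>"])
      using K notin disj Bint Be Bsub Mn by (force simp: pairwise_insert)
  qed
  from J obtain Bd where Bd: "\<And>v. v \<in> Jvals x \<Longrightarrow> v \<le> Bd" unfolding inJ_def bdd_above_def by auto
  obtain k :: nat where k: "Bd / e\<^sup>2 < real k" using reals_Archimedean2 by blast
  obtain \<K> where K: "finite \<K>" "card \<K> = k" "\<forall>K\<in>\<K>. nat_interval K \<and> K \<subseteq> {0..} \<and> e\<^sup>2 \<le> (isum x K)\<^sup>2" "pairwise disjnt \<K>"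
    using claim by blast
  have "(\<Sum>K\<in>\<K>. (isum x K)\<^sup>2) \<in> Jvals x" unfolding Jvals_def using K by auto
  then have le: "(\<Sum>K\<in>\<K>. (isum x K)\<^sup>2) \<le> Bd" by (rule Bd)
  have "real k * e\<^sup>2 \<le> (\<Sum>K\<in>\<K>. (isum x K)\<^sup>2)"
    using sum_bounded_below[of \<K> "e\<^sup>2" "\<lambda>K. (isum x K)\<^sup>2"] K by auto
  moreover have "Bd < real k * e\<^sup>2" using k e by (simp add: field_simps)
  ultimately show False using le by linarith
qed

lemma fam_conv:
  assumes "interval_family I F" "i \<in> F" "j \<in> F" "i \<le> k" "k \<le> j"
  shows "k \<in> F"
  using assms unfolding interval_family_def by auto

lemma fam_pos: "interval_family I F \<Longrightarrow> i \<in> F \<Longrightarrow> 1 \<le> i"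
  unfolding interval_family_def by auto

lemma fam_int: "interval_family I F \<Longrightarrow> i \<in> F \<Longrightarrow> nat_interval (I i)"
  unfolding interval_family_def by auto

lemma fam_ne: "interval_family I F \<Longrightarrow> i \<in> F \<Longrightarrow> I i \<noteq> {}"
  using fam_int nat_interval_def by blast

lemma fam_order:
  assumes fam: "interval_family I F" and i: "i \<in> F" and j: "j \<in> F" and ij: "i < j"
  shows "\<forall>a\<in>I i. \<forall>b\<in>I j. a < b"
  using j ij
proof (induction j)
  case 0 then show ?case by simp
next
  case (Suc j)
  have jF: "j \<in> F" using fam_conv[OF fam i Suc.prems(1), of j] Suc.prems by simp
  have step: "\<forall>a\<in>I j. \<forall>b\<in>I (j+1). a < b" using fam jF Suc.prems(1) unfolding interval_family_def by auto
  show ?case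
  proof (cases "i = j")
    case True then show ?thesis using step by simp
  next
    case False
    then have IH: "\<forall>a\<in>I i. \<forall>b\<in>I j. a < b" using Suc.IH jF Suc.prems by simp
    obtain c where "c \<in> I j" using fam_ne[OF fam jF] by blast
    then show ?thesis using IH step by fastforce
  qed
qed

lemma fam_disj:
  assumes fam: "interval_family I F" and "i \<in> F" "j \<in> F" "i \<noteq> j"
  shows "disjnt (I i) (I j)"
proof (cases "i < j")
  case True then show ?thesis using fam_order[OF fam assms(2,3) True] unfolding disjnt_def by (meson disjoint_iff less_irrefl)
next
  case False then have "j < i" using assms by simp
  then show ?thesis using fam_order[OF fam assms(3,2)] unfolding disjnt_def by (meson disjoint_iff less_irrefl)
qed

lemma norming_Sup:
  assumes "norming x I F"
  shows "(\<Sum>\<^sub>\<infinity>i\<in>F. (isum x (I i))\<^sup>2) = Sup (Jvals x)"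
  using assms unfolding norming_def fam_norm_def Jnorm_def by simp

lemma Jvals_0: "0 \<in> Jvals x"
  unfolding Jvals_def by (auto intro!: exI[of _ "{}"])

lemma improve:
  fixes g :: "'a \<Rightarrow> nat set"
  assumes J: "inJ x" and N: "norming x I F" and S: "S \<subseteq> F" and A: "finite A"
    and gi: "\<And>a. a \<in> A \<Longrightarrow> g a = {} \<or> nat_interval (g a)"
    and gd: "\<And>a b. a \<in> A \<Longrightarrow> b \<in> A \<Longrightarrow> a \<noteq> b \<Longrightarrow> disjnt (g a) (g b)"
    and gF: "\<And>a j. a \<in> A \<Longrightarrow> j \<in> F - S \<Longrightarrow> disjnt (g a) (I j)"
  shows "(\<Sum>a\<in>A. (isum x (g a))\<^sup>2) \<le> (\<Sum>\<^sub>\<infinity>i\<in>S. (isum x (I i))\<^sup>2)"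
proof (rule ccontr)
  define f where "f i = (isum x (I i))\<^sup>2" for i
  assume "\<not> ?thesis"
  then have gt: "(\<Sum>a\<in>A. (isum x (g a))\<^sup>2) > infsum f S" unfolding f_def by simp
  define \<delta> where "\<delta> = (\<Sum>a\<in>A. (isum x (g a))\<^sup>2) - infsum f S"
  have dpos: "\<delta> > 0" using gt \<delta>_def by simp
  have fam: "interval_family I F" using N norming_def by blast
  have sF: "f summable_on F" using N unfolding norming_def f_def by simp
  have sS: "f summable_on S" using summable_on_subset_banach[OF sF S] .
  have sR: "f summable_on (F - S)" using summable_on_subset_banach[OF sF] by blast
  have T: "infsum f F = infsum f S + infsum f (F - S)"
    using infsum_Un_disjoint[OF sS sR] S by (simp add: Un_absorb1)
  have TS: "infsum f F = Sup (Jvals x)" using norming_Sup[OF N] unfolding f_def .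
  obtain D where D: "finite D" "D \<subseteq> F - S" "dist (sum f D) (infsum f (F - S)) \<le> \<delta>/2"
    using has_sum_finite_approximation[OF has_sum_infsum[OF sR], of "\<delta>/2"] dpos by auto
  have Dbig: "sum f D \<ge> infsum f (F - S) - \<delta>/2" using D(3) unfolding dist_real_def by linarith
  define A' where "A' = {a\<in>A. g a \<noteq> {}}"
  have injg: "inj_on g A'"
  proof (rule inj_onI)
    fix a b assume "a \<in> A'" "b \<in> A'" "g a = g b"
    then show "a = b" using gd unfolding A'_def disjnt_def by force
  qed
  have injI: "inj_on I D"
  proof (rule inj_onI)
    fix a b assume "a \<in> D" "b \<in> D" "I a = I b"
    then show "a = b" using fam_disj[OF fam, of a b] fam_ne[OF fam, of a] D(2) unfolding disjnt_def by force
  qed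
  have cross: "g ` A' \<inter> I ` D = {}"
  proof -
    { fix a j assume "a \<in> A'" "j \<in> D" "g a = I j"
      then have False using gF[of a j] D(2) unfolding A'_def disjnt_def by auto }
    then show ?thesis by blast
  qed
  define \<K> where "\<K> = g ` A' \<union> I ` D"
  have Kfin: "finite \<K>" unfolding \<K>_def A'_def using A D(1) by simp
  have Kint: "\<forall>K\<in>\<K>. nat_interval K"
    unfolding \<K>_def A'_def using gi D(2) fam_int[OF fam] by auto
  have Kdis: "pairwise disjnt \<K>"
    unfolding \<K>_def pairwise_def
  proof (intro ballI impI)
    fix K L assume KL: "K \<in> g ` A' \<union> I ` D" "L \<in> g ` A' \<union> I ` D" "K \<noteq> L"
    show "disjnt K L"
    proof (cases "K \<in> g ` A'")
      case True
      then obtain a where a: "a \<in> A'" "K = g a" by blast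
      show ?thesis
      proof (cases "L \<in> g ` A'")
        case True
        then obtain b where "b \<in> A'" "L = g b" by blast
        then show ?thesis using a KL gd unfolding A'_def by auto
      next
        case False
        then obtain j where "j \<in> D" "L = I j" using KL by blast
        then show ?thesis using a gF D(2) unfolding A'_def by auto
      qed
    next
      case False
      then obtain j where j: "j \<in> D" "K = I j" using KL by blast
      show ?thesis
      proof (cases "L \<in> g ` A'")
        case True
        then obtain b where "b \<in> A'" "L = g b" by blast
        then show ?thesis using j gF D(2) unfolding A'_def by (auto simp: disjnt_sym)
      next
        case False
        then obtain k where "k \<in> D" "L = I k" using KL by blast
        then show ?thesis using j KL fam_disj[OF fam, of j k] D(2) by auto
      qed
    qed
  qed
  have val: "(\<Sum>K\<in>\<K>. (isum x K)\<^sup>2) = (\<Sum>a\<in>A. (isum x (g a))\<^sup>2) + sum f D"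
  proof -
    have "(\<Sum>K\<in>\<K>. (isum x K)\<^sup>2) = (\<Sum>K\<in>g ` A'. (isum x K)\<^sup>2) + (\<Sum>K\<in>I ` D. (isum x K)\<^sup>2)"
      unfolding \<K>_def using Kfin cross \<K>_def by (intro sum.union_disjoint) auto
    also have "(\<Sum>K\<in>g ` A'. (isum x K)\<^sup>2) = (\<Sum>a\<in>A'. (isum x (g a))\<^sup>2)"
      using sum.reindex[OF injg] by simp
    also have "\<dots> = (\<Sum>a\<in>A. (isum x (g a))\<^sup>2)"
      using A unfolding A'_def by (intro sum.mono_neutral_left) auto
    also have "(\<Sum>K\<in>I ` D. (isum x K)\<^sup>2) = sum f D"
      using sum.reindex[OF injI] unfolding f_def by simp
    finally show ?thesis .
  qed
  have inJv: "(\<Sum>K\<in>\<K>. (isum x K)\<^sup>2) \<in> Jvals x"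
    unfolding Jvals_def using Kfin Kint Kdis by auto
  have "(\<Sum>K\<in>\<K>. (isum x K)\<^sup>2) \<le> Sup (Jvals x)"
    using cSup_upper[OF inJv] J unfolding inJ_def by blast
  then show False using val T TS Dbig dpos \<delta>_def by linarith
qed

lemma arith3: fixes a b c :: real assumes "b\<noteq>0" "a\<^sup>2+b\<^sup>2+c\<^sup>2 \<le> (a+b+c)\<^sup>2" "(a+b)\<^sup>2+c\<^sup>2 \<le> (a+b+c)\<^sup>2" "a\<^sup>2+(b+c)\<^sup>2 \<le> (a+b+c)\<^sup>2"
 shows "a+b+c \<noteq> 0 \<and> a+b \<noteq> 0 \<and> b+c\<noteq>0 \<and> sgn(a+b) = sgn(a+b+c) \<and> sgn(b+c) = sgn(a+b+c)"
proof -
  have h1: "a*b+b*c+a*c \<ge> 0" using assms(2) by (simp add: power2_eq_square algebra_simps)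
  have h2: "(a+b)*c \<ge> 0" using assms(3) by (simp add: power2_eq_square algebra_simps)
  have h3: "a*(b+c) \<ge> 0" using assms(4) by (simp add: power2_eq_square algebra_simps)
  have n1: "a+b \<noteq> 0"
  proof
    assume "a+b = 0" then have "a = -b" by simp
    then show False using h1 assms(1) by (simp add: algebra_simps) (metis add.inverse_inverse add_cancel_right_left mult_minus_left neg_0_le_iff_le not_square_less_zero order_antisym_conv power2_eq_square zero_le_power2 zero_less_power2)
  qed
  have n2: "b+c \<noteq> 0"
  proof
    assume "b+c = 0" then have "c = -b" by simp
    then show False using h1 assms(1) by (simp add: algebra_simps) (metis add.inverse_inverse add_cancel_right_left mult_minus_left neg_0_le_iff_le not_square_less_zero order_antisym_conv power2_eq_square zero_le_power2 zero_less_power2)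
  qed
  have s1: "sgn(a+b) = sgn(a+b+c)" using h2 n1 by (cases "a+b > 0") (auto simp: sgn_real_def zero_le_mult_iff)
  have s2: "sgn(b+c) = sgn(a+b+c)" using h3 n2 by (cases "b+c > 0") (auto simp: sgn_real_def zero_le_mult_iff)
  have "a+b+c \<noteq> 0" using s1 n1 by (auto simp: sgn_real_def split: if_splits)
  then show ?thesis using n1 n2 s1 s2 by blast
qed

lemma summable_int0: "inJ x \<Longrightarrow> B = {} \<or> nat_interval B \<Longrightarrow> summable (restr x B)"
  using summable_interval[of x B] by (auto simp: restr_def)

lemma isum_add:
  assumes "summable (restr x P)" "summable (restr x Q)" "P \<inter> Q = {}"
  shows "isum x (P \<union> Q) = isum x P + isum x Q" "summable (restr x (P \<union> Q))"
proof -
  have e: "restr x (P \<union> Q) = (\<lambda>k. restr x P k + restr x Q k)"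
    using assms(3) by (auto simp: restr_def fun_eq_iff)
  show s: "summable (restr x (P \<union> Q))" unfolding e using assms summable_add by blast
  show "isum x (P \<union> Q) = isum x P + isum x Q"
    using isum_suminf[OF s] isum_suminf[OF assms(1)] isum_suminf[OF assms(2)] suminf_add[OF assms(1,2)] e by simp
qed

lemma part1:
  assumes J: "inJ x" and N: "norming x I F"
  shows "supp x \<subseteq> (\<Union>i\<in>F. I i)"
proof
  fix n assume n: "n \<in> supp x"
  show "n \<in> (\<Union>i\<in>F. I i)"
  proof (rule ccontr)
    assume nn: "n \<notin> (\<Union>i\<in>F. I i)"
    have "(\<Sum>a\<in>{()}. (isum x ((\<lambda>_. {n}) a))\<^sup>2) \<le> (\<Sum>\<^sub>\<infinity>i\<in>{}. (isum x (I i))\<^sup>2)"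
      apply (rule improve[OF J N])
      using n nn by (auto simp: nat_interval_def supp_def disjnt_def)
    then have "(x n)\<^sup>2 \<le> 0" using isum_finite[of "{n}" x] by simp
    then show False using n by (simp add: supp_def)
  qed
qed

lemma merge:
  assumes J: "inJ x" and N: "norming x I F" and i: "i \<in> F" and j: "j \<in> F" and ij: "i < j"
    and Z: "\<And>a. (\<forall>u\<in>I i. u < a) \<Longrightarrow> (\<forall>v\<in>I j. a < v) \<Longrightarrow> x a = 0"
  shows "isum x (I i) * isum x (I j) \<le> 0"
proof -
  have fam: "interval_family I F" using N norming_def by blast
  have ord: "\<forall>a\<in>I i. \<forall>b\<in>I j. a < b" using fam_order[OF fam i j ij] .
  have Ii: "nat_interval (I i)" and Ij: "nat_interval (I j)" using fam_int[OF fam] i j by auto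
  define H where "H = {a. (\<exists>u\<in>I i. u \<le> a) \<and> (\<exists>v\<in>I j. a \<le> v)}"
  define S where "S = {i..j}"
  have SF: "S \<subseteq> F" unfolding S_def using fam_conv[OF fam i j] by auto
  obtain u0 where u0: "u0 \<in> I i" using fam_ne[OF fam i] by blast
  obtain v0 where v0: "v0 \<in> I j" using fam_ne[OF fam j] by blast
  have Hint: "nat_interval H"
    unfolding nat_interval_def
  proof (intro conjI ballI allI impI)
    show "H \<noteq> {}" using u0 v0 ord unfolding H_def by (metis (mono_tags, lifting) empty_iff le_refl less_imp_le mem_Collect_eq)
  next
    fix n assume "n \<in> H"
    then obtain u where "u \<in> I i" "u \<le> n" unfolding H_def by blast
    then show "0 < n" using Ii unfolding nat_interval_def by fastforce
  next
    fix a c b assume "a \<in> H" "c \<in> H" "a \<le> b \<and> b \<le> c"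
    then show "b \<in> H" unfolding H_def using order_trans by blast
  qed
  have Hdis: "disjnt H (I k)" if k: "k \<in> F - S" for k
  proof -
    have kF: "k \<in> F" using k by simp
    have "k < i \<or> j < k" using k unfolding S_def by auto
    then show ?thesis
    proof
      assume "k < i"
      then have "\<forall>b\<in>I k. b < u0" using fam_order[OF fam kF i] u0 by blast
      moreover have "\<forall>b\<in>I k. \<forall>u\<in>I i. b < u" using fam_order[OF fam kF i] \<open>k < i\<close> by blast
      ultimately show ?thesis unfolding disjnt_def H_def by (auto simp: not_le[symmetric])
    next
      assume "j < k"
      then have "\<forall>v\<in>I j. \<forall>b\<in>I k. v < b" using fam_order[OF fam j kF] by blast
      then show ?thesis unfolding disjnt_def H_def by (auto simp: not_le[symmetric])
    qed
  qed
  have dij: "I i \<inter> I j = {}" using ord by fastforce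
  have rH: "restr x H = restr x (I i \<union> I j)"
  proof
    fix a
    show "restr x H a = restr x (I i \<union> I j) a"
    proof (cases "a \<in> I i \<union> I j")
      case True
      then have "a \<in> H" unfolding H_def using u0 v0 ord by (metis (mono_tags, lifting) Un_iff le_refl less_imp_le mem_Collect_eq)
      then show ?thesis using True by (simp add: restr_def)
    next
      case False
      show ?thesis
      proof (cases "a \<in> H")
        case True
        then obtain u v where uv: "u \<in> I i" "u \<le> a" "v \<in> I j" "a \<le> v" unfolding H_def by blast
        have "\<forall>w\<in>I i. w < a"
        proof
          fix w assume w: "w \<in> I i"
          show "w < a"
          proof (rule ccontr)
            assume "\<not> w < a" then have "a \<le> w" by simp
            then have "a \<in> I i" using Ii uv w unfolding nat_interval_def by blast
            then show False using False by simp
          qed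
        qed
        moreover have "\<forall>w\<in>I j. a < w"
        proof
          fix w assume w: "w \<in> I j"
          show "a < w"
          proof (rule ccontr)
            assume "\<not> a < w" then have "w \<le> a" by simp
            then have "a \<in> I j" using Ij uv w unfolding nat_interval_def by blast
            then show False using False by simp
          qed
        qed
        ultimately have "x a = 0" using Z by blast
        then show ?thesis by (simp add: restr_def)
      next
        case False2: False
        then show ?thesis using False by (simp add: restr_def)
      qed
    qed
  qed
  have si: "summable (restr x (I i))" using summable_interval[OF J Ii] .
  have sj: "summable (restr x (I j))" using summable_interval[OF J Ij] .
  have isH: "isum x H = isum x (I i) + isum x (I j)"
    using isum_cong[OF rH] isum_add(1)[OF si sj dij] by simp
  have zero: "isum x (I k) = 0" if k: "k \<in> S - {i, j}" for k
  proof -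
    have kF: "k \<in> F" using k SF by auto
    have ik: "i < k" and kj: "k < j" using k unfolding S_def by auto
    have "restr x (I k) = restr x {}"
    proof
      fix a show "restr x (I k) a = restr x {} a"
      proof (cases "a \<in> I k")
        case True
        have "\<forall>u\<in>I i. u < a" using fam_order[OF fam i kF ik] True by blast
        moreover have "\<forall>v\<in>I j. a < v" using fam_order[OF fam kF j kj] True by blast
        ultimately show ?thesis using Z True by (simp add: restr_def)
      qed (simp add: restr_def)
    qed
    then show ?thesis using isum_cong by fastforce
  qed
  have infS: "(\<Sum>\<^sub>\<infinity>k\<in>S. (isum x (I k))\<^sup>2) = (isum x (I i))\<^sup>2 + (isum x (I j))\<^sup>2"
  proof -
    have "(\<Sum>\<^sub>\<infinity>k\<in>S. (isum x (I k))\<^sup>2) = (\<Sum>k\<in>S. (isum x (I k))\<^sup>2)" unfolding S_def by simp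
    also have "\<dots> = (\<Sum>k\<in>{i,j}. (isum x (I k))\<^sup>2)"
      using zero ij unfolding S_def by (intro sum.mono_neutral_right) auto
    also have "\<dots> = (isum x (I i))\<^sup>2 + (isum x (I j))\<^sup>2" using ij by simp
    finally show ?thesis .
  qed
  have "(\<Sum>a\<in>{()}. (isum x ((\<lambda>_. H) a))\<^sup>2) \<le> (\<Sum>\<^sub>\<infinity>k\<in>S. (isum x (I k))\<^sup>2)"
    apply (rule improve[OF J N SF])
    using Hint Hdis by auto
  then have "(isum x (I i) + isum x (I j))\<^sup>2 \<le> (isum x (I i))\<^sup>2 + (isum x (I j))\<^sup>2"
    using isH infS by simp
  then show ?thesis by (simp add: power2_eq_square algebra_simps)
qed

lemma sub_int:
  assumes "nat_interval I" "C \<subseteq> I" "\<And>a c b. a \<in> C \<Longrightarrow> c \<in> C \<Longrightarrow> a \<le> b \<Longrightarrow> b \<le> c \<Longrightarrow> b \<in> C"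
  shows "C = {} \<or> nat_interval C"
  using assms unfolding nat_interval_def by blast

lemma part3:
  assumes J: "inJ x" and N: "norming x I F" and i: "i \<in> F" and n: "n \<in> I i" and ns: "n \<in> supp x"
  shows "isum x (I i) \<noteq> 0 \<and> isum x {m\<in>I i. m \<le> n} \<noteq> 0 \<and> isum x {m\<in>I i. n \<le> m} \<noteq> 0 \<and>
           sgn (isum x {m\<in>I i. m \<le> n}) = sgn (isum x (I i)) \<and>
           sgn (isum x {m\<in>I i. n \<le> m}) = sgn (isum x (I i))"
proof -
  have fam: "interval_family I F" using N norming_def by blast
  have Ii: "nat_interval (I i)" using fam_int[OF fam i] .
  define A where "A = {m\<in>I i. m < n}"
  define B where "B = {m\<in>I i. n < m}"
  have Ai: "A = {} \<or> nat_interval A" unfolding A_def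
  proof (rule sub_int[OF Ii])
    fix a c b assume abc: "a \<in> {m\<in>I i. m < n}" "c \<in> {m\<in>I i. m < n}" "a \<le> b" "b \<le> c"
    then have "b \<in> I i" using Ii unfolding nat_interval_def by blast
    then show "b \<in> {m\<in>I i. m < n}" using abc by auto
  qed auto
  have Bi: "B = {} \<or> nat_interval B" unfolding B_def
  proof (rule sub_int[OF Ii])
    fix a c b assume abc: "a \<in> {m\<in>I i. n < m}" "c \<in> {m\<in>I i. n < m}" "a \<le> b" "b \<le> c"
    then have "b \<in> I i" using Ii unfolding nat_interval_def by blast
    then show "b \<in> {m\<in>I i. n < m}" using abc by auto
  qed auto
  have nI: "nat_interval {n}" using Ii n unfolding nat_interval_def by auto
  have sA: "summable (restr x A)" using summable_int0[OF J Ai] .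
  have sB: "summable (restr x B)" using summable_int0[OF J Bi] .
  have sn: "summable (restr x {n})" using summable_interval[OF J nI] .
  have L: "{m\<in>I i. m \<le> n} = A \<union> {n}" using n unfolding A_def by auto
  have R: "{m\<in>I i. n \<le> m} = {n} \<union> B" using n unfolding B_def by auto
  have T: "I i = (A \<union> {n}) \<union> B" using n unfolding A_def B_def by auto
  have xn: "isum x {n} = x n" using isum_finite[of "{n}" x] by simp
  have iL: "isum x {m\<in>I i. m \<le> n} = isum x A + x n"
    unfolding L using isum_add(1)[OF sA sn] xn unfolding A_def by simp
  have sL: "summable (restr x (A \<union> {n}))" using isum_add(2)[OF sA sn] unfolding A_def by simp
  have iR: "isum x {m\<in>I i. n \<le> m} = x n + isum x B"
    unfolding R using isum_add(1)[OF sn sB] xn unfolding B_def by simp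
  have iT: "isum x (I i) = isum x A + x n + isum x B"
  proof -
    have "isum x ((A \<union> {n}) \<union> B) = isum x (A \<union> {n}) + isum x B"
      by (rule isum_add(1)[OF sL sB]) (auto simp: A_def B_def)
    then show ?thesis using iL L T by simp
  qed
  have fF: "\<And>C j. C \<subseteq> I i \<Longrightarrow> j \<in> F - {i} \<Longrightarrow> disjnt C (I j)"
  proof -
    fix C j assume "C \<subseteq> I i" "j \<in> F - {i}"
    then show "disjnt C (I j)" using fam_disj[OF fam i, of j] disjnt_subset1 by auto
  qed
  have infi: "(\<Sum>\<^sub>\<infinity>k\<in>{i}. (isum x (I k))\<^sup>2) = (isum x (I i))\<^sup>2" by simp
  have Ii': "I i = {} \<or> nat_interval (I i)" using Ii by simp
  define g3 where "g3 k = (if k = (0::nat) then A else if k = 1 then {n} else B)" for k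
  have h3: "(\<Sum>k\<in>{0,1,2}. (isum x (g3 k))\<^sup>2) \<le> (\<Sum>\<^sub>\<infinity>k\<in>{i}. (isum x (I k))\<^sup>2)"
    apply (rule improve[OF J N _ _])
    using i Ai Bi nI apply (auto simp: g3_def)[3]
    apply (auto simp: g3_def A_def B_def disjnt_def)[1]
    using fF n unfolding g3_def A_def B_def by auto
  have Lint: "nat_interval (A \<union> {n})"
  proof -
    have "A \<union> {n} = {} \<or> nat_interval (A \<union> {n})" unfolding L[symmetric]
    proof (rule sub_int[OF Ii])
      fix a c b assume abc: "a \<in> {m\<in>I i. m \<le> n}" "c \<in> {m\<in>I i. m \<le> n}" "a \<le> b" "b \<le> c"
      then have "b \<in> I i" using Ii unfolding nat_interval_def by blast
      then show "b \<in> {m\<in>I i. m \<le> n}" using abc by auto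
    qed auto
    then show ?thesis by auto
  qed
  have Rint: "nat_interval ({n} \<union> B)"
  proof -
    have "{n} \<union> B = {} \<or> nat_interval ({n} \<union> B)" unfolding R[symmetric]
    proof (rule sub_int[OF Ii])
      fix a c b assume abc: "a \<in> {m\<in>I i. n \<le> m}" "c \<in> {m\<in>I i. n \<le> m}" "a \<le> b" "b \<le> c"
      then have "b \<in> I i" using Ii unfolding nat_interval_def by blast
      then show "b \<in> {m\<in>I i. n \<le> m}" using abc by auto
    qed auto
    then show ?thesis by auto
  qed
  define g2 where "g2 k = (if k = (0::nat) then A \<union> {n} else B)" for k
  have h2: "(\<Sum>k\<in>{0,1}. (isum x (g2 k))\<^sup>2) \<le> (\<Sum>\<^sub>\<infinity>k\<in>{i}. (isum x (I k))\<^sup>2)"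
    apply (rule improve[OF J N _ _])
    using i Bi apply (auto simp: g2_def)[2]
    using Lint Bi apply (simp add: g2_def)
    apply (auto simp: g2_def A_def B_def disjnt_def)[1]
    using fF n unfolding g2_def A_def B_def by auto
  define g2' where "g2' k = (if k = (0::nat) then A else {n} \<union> B)" for k
  have h2': "(\<Sum>k\<in>{0,1}. (isum x (g2' k))\<^sup>2) \<le> (\<Sum>\<^sub>\<infinity>k\<in>{i}. (isum x (I k))\<^sup>2)"
    apply (rule improve[OF J N _ _])
    using i Ai apply (auto simp: g2'_def)[2]
    using Rint Ai apply (simp add: g2'_def)
    apply (auto simp: g2'_def A_def B_def disjnt_def)[1]
    using fF n unfolding g2'_def A_def B_def by auto
  have e3: "(isum x A)\<^sup>2 + (x n)\<^sup>2 + (isum x B)\<^sup>2 \<le> (isum x A + x n + isum x B)\<^sup>2"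
    using h3 iT xn unfolding g3_def by simp
  have e2: "(isum x A + x n)\<^sup>2 + (isum x B)\<^sup>2 \<le> (isum x A + x n + isum x B)\<^sup>2"
    using h2 iT iL L unfolding g2_def by simp
  have e2': "(isum x A)\<^sup>2 + (x n + isum x B)\<^sup>2 \<le> (isum x A + x n + isum x B)\<^sup>2"
    using h2' iT iR R unfolding g2'_def by simp
  have "x n \<noteq> 0" using ns supp_def by auto
  from arith3[OF this e3 e2 e2'] show ?thesis using iT iL iR by simp
qed

lemma zero_of_nsupp: "0 < a \<Longrightarrow> a \<notin> supp x \<Longrightarrow> x a = 0"
  unfolding supp_def by auto

lemma part4:
  assumes J: "inJ x" and N: "norming x I F" and i: "i \<in> F" and i1: "i + 1 \<in> F"
  shows "isum x (I i) * isum x (I (i + 1)) \<le> 0"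
proof (rule merge[OF J N i i1])
  have fam: "interval_family I F" using N norming_def by blast
  show "i < i + 1" by simp
  fix a assume A: "\<forall>u\<in>I i. u < a" and B: "\<forall>v\<in>I (i + 1). a < v"
  obtain u0 where u0: "u0 \<in> I i" using fam_ne[OF fam i] by blast
  obtain v0 where v0: "v0 \<in> I (i+1)" using fam_ne[OF fam i1] by blast
  have apos: "0 < a" using A u0 by fastforce
  have "a \<notin> supp x"
  proof
    assume "a \<in> supp x"
    then obtain k where k: "k \<in> F" "a \<in> I k" using part1[OF J N] by blast
    consider "k < i" | "k = i" | "k = i + 1" | "i + 1 < k" by linarith
    then show False
    proof cases
      case 1 then show ?thesis using fam_order[OF fam k(1) i] k u0 A by fastforce
    next
      case 2 then show ?thesis using A k by blast
    next
      case 3 then show ?thesis using B k by blast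
    next
      case 4 then show ?thesis using fam_order[OF fam i1 k(1)] k v0 B by fastforce
    qed
  qed
  then show "x a = 0" using zero_of_nsupp apos by blast
qed

lemma part5core:
  assumes J: "inJ x" and N: "norming x I F" and p: "p \<in> F" and q: "q \<in> F" and pq: "p \<noteq> q"
    and n1: "n1 \<in> I p" and n2: "n2 \<in> I q" and s1: "n1 \<in> supp x" and s2: "n2 \<in> supp x"
    and lt: "n1 < n2" and gap: "\<forall>m. n1 < m \<and> m < n2 \<longrightarrow> m \<notin> supp x" and pos: "x n1 * x n2 > 0"
  shows False
proof -
  have fam: "interval_family I F" using N norming_def by blast
  have plq: "p < q"
  proof (rule ccontr)
    assume "\<not> p < q" then have "q < p" using pq by simp
    then show False using fam_order[OF fam q p] n1 n2 lt by fastforce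
  qed
  have ord: "\<forall>a\<in>I p. \<forall>b\<in>I q. a < b" using fam_order[OF fam p q plq] .
  have R: "isum x {m\<in>I p. n1 \<le> m} = x n1"
  proof -
    have "restr x {m\<in>I p. n1 \<le> m} = restr x {n1}"
    proof
      fix m show "restr x {m\<in>I p. n1 \<le> m} m = restr x {n1} m"
      proof (cases "m \<in> I p \<and> n1 < m")
        case True
        then have "m < n2" using ord n2 by blast
        then have "x m = 0" using gap True zero_of_nsupp[of m x] by auto
        then show ?thesis using True by (auto simp: restr_def)
      next
        case False
        have "m \<in> {m\<in>I p. n1 \<le> m} \<longleftrightarrow> m \<in> {n1}" using False n1 by auto
        then show ?thesis unfolding restr_def by simp
      qed
    qed
    then have "isum x {m\<in>I p. n1 \<le> m} = isum x {n1}" by (rule isum_cong)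
    then show ?thesis using isum_finite[of "{n1}" x] by simp
  qed
  have L: "isum x {m\<in>I q. m \<le> n2} = x n2"
  proof -
    have "restr x {m\<in>I q. m \<le> n2} = restr x {n2}"
    proof
      fix m show "restr x {m\<in>I q. m \<le> n2} m = restr x {n2} m"
      proof (cases "m \<in> I q \<and> m < n2")
        case True
        then have "n1 < m" using ord n1 by blast
        then have "x m = 0" using gap True zero_of_nsupp[of m x] by auto
        then show ?thesis using True by (auto simp: restr_def)
      next
        case False
        have "m \<in> {m\<in>I q. m \<le> n2} \<longleftrightarrow> m \<in> {n2}" using False n2 by auto
        then show ?thesis unfolding restr_def by simp
      qed
    qed
    then have "isum x {m\<in>I q. m \<le> n2} = isum x {n2}" by (rule isum_cong)
    then show ?thesis using isum_finite[of "{n2}" x] by simp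
  qed
  have sp: "sgn (x n1) = sgn (isum x (I p))" using part3[OF J N p n1 s1] R by simp
  have sq: "sgn (x n2) = sgn (isum x (I q))" using part3[OF J N q n2 s2] L by simp
  have m: "isum x (I p) * isum x (I q) \<le> 0"
  proof (rule merge[OF J N p q plq])
    fix a assume A: "\<forall>u\<in>I p. u < a" and B: "\<forall>v\<in>I q. a < v"
    then have "n1 < a" "a < n2" using n1 n2 by auto
    then show "x a = 0" using gap zero_of_nsupp[of a x] by auto
  qed
  have "sgn (isum x (I p) * isum x (I q)) = sgn (x n1 * x n2)" using sp sq by (simp add: sgn_mult)
  also have "\<dots> = 1" using pos by simp
  finally show False using m by (auto simp: sgn_real_def split: if_splits)
qed

lemma fam_inj: "interval_family I F \<Longrightarrow> D \<subseteq> F \<Longrightarrow> inj_on I D"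
proof (rule inj_onI)
  fix a b assume fam: "interval_family I F" and "D \<subseteq> F" "a \<in> D" "b \<in> D" "I a = I b"
  then show "a = b" using fam_disj[OF fam, of a b] fam_ne[OF fam, of a] unfolding disjnt_def by force
qed

lemma fam_pairwise: "interval_family I F \<Longrightarrow> D \<subseteq> F \<Longrightarrow> pairwise disjnt (I ` D)"
  unfolding pairwise_def using fam_disj by blast

lemma part2:
  assumes J: "inJ x" and N: "norming x I F" and G: "nat_interval G" and GF: "G \<subseteq> F"
  shows "(\<Sum>\<^sub>\<infinity>i\<in>G. (isum x (I i))\<^sup>2) = (Jnorm (restr x (\<Union>i\<in>G. I i)))\<^sup>2"
proof -
  define f where "f i = (isum x (I i))\<^sup>2" for i
  define U where "U = (\<Union>i\<in>G. I i)"
  define y where "y = restr x U"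
  define Hull where "Hull = {a. \<exists>u\<in>U. \<exists>w\<in>U. u \<le> a \<and> a \<le> w}"
  have fam: "interval_family I F" using N norming_def by blast
  have sF: "f summable_on F" using N unfolding norming_def f_def by simp
  have sG: "f summable_on G" using summable_on_subset_banach[OF sF GF] .
  have UH: "U \<subseteq> Hull" unfolding Hull_def by blast
  have side: "(\<forall>g\<in>G. j < g) \<or> (\<forall>g\<in>G. g < j)" if j: "j \<in> F" "j \<notin> G" for j
  proof (rule ccontr)
    assume "\<not> ?thesis"
    then obtain g1 g2 where "g1 \<in> G" "g2 \<in> G" "g1 \<le> j" "j \<le> g2" by (auto simp: not_less)
    then have "j \<in> G" using G unfolding nat_interval_def by blast
    then show False using j by simp
  qed
  have outside: "b \<notin> Hull" if jb: "j \<in> F" "j \<notin> G" "b \<in> I j" for j b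
  proof
    assume "b \<in> Hull"
    then obtain u w where uw: "u \<in> U" "w \<in> U" "u \<le> b" "b \<le> w" unfolding Hull_def by blast
    obtain gu where gu: "gu \<in> G" "u \<in> I gu" using uw unfolding U_def by blast
    obtain gw where gw: "gw \<in> G" "w \<in> I gw" using uw unfolding U_def by blast
    from side[OF jb(1,2)] show False
    proof
      assume "\<forall>g\<in>G. j < g"
      then have "b < u" using fam_order[OF fam jb(1), of gu] gu GF jb(3) by blast
      then show False using uw by simp
    next
      assume "\<forall>g\<in>G. g < j"
      then have "w < b" using fam_order[OF fam _ jb(1), of gw] gw GF jb(3) by blast
      then show False using uw by simp
    qed
  qed
  have zero: "x a = 0" if a: "a \<in> Hull" "a \<notin> U" for a
  proof -
    obtain u where u: "u \<in> U" "u \<le> a" using a unfolding Hull_def by blast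
    obtain gu where gu: "gu \<in> G" "u \<in> I gu" using u unfolding U_def by blast
    have "0 < u" using fam_int[OF fam, of gu] gu GF unfolding nat_interval_def by blast
    then have apos: "0 < a" using u by simp
    have "a \<notin> supp x"
    proof
      assume "a \<in> supp x"
      then obtain j where j: "j \<in> F" "a \<in> I j" using part1[OF J N] by blast
      show False
      proof (cases "j \<in> G")
        case True then show False using j a unfolding U_def by blast
      next
        case False then show False using outside[OF j(1) False j(2)] a by blast
      qed
    qed
    then show ?thesis using zero_of_nsupp apos by blast
  qed
  have isy: "isum y K = isum x (K \<inter> Hull)" for K
  proof (rule isum_cong)
    show "restr y K = restr x (K \<inter> Hull)"
    proof
      fix a show "restr y K a = restr x (K \<inter> Hull) a"
        using UH zero[of a] unfolding y_def restr_def by auto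
    qed
  qed
  have upper: "v \<le> infsum f G" if v: "v \<in> Jvals y" for v
  proof -
    obtain \<K> where K: "v = (\<Sum>K\<in>\<K>. (isum y K)\<^sup>2)" "finite \<K>" "\<forall>K\<in>\<K>. nat_interval K" "pairwise disjnt \<K>"
      using v unfolding Jvals_def by blast
    have gi: "K \<inter> Hull = {} \<or> nat_interval (K \<inter> Hull)" if KK: "K \<in> \<K>" for K
    proof -
      have Ki: "nat_interval K" using K(3) KK by blast
      have conv: "b \<in> K \<inter> Hull" if abc: "a \<in> K \<inter> Hull" "c \<in> K \<inter> Hull" "a \<le> b" "b \<le> c" for a b c
      proof -
        have aK: "a \<in> K" and cK: "c \<in> K" using abc(1,2) by auto
        have "b \<in> K" using Ki aK cK abc(3,4) unfolding nat_interval_def by blast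
        moreover obtain u where "u \<in> U" "u \<le> a" using abc(1) unfolding Hull_def by blast
        moreover obtain w where "w \<in> U" "c \<le> w" using abc(2) unfolding Hull_def by blast
        ultimately have "b \<in> K" "u \<in> U" "u \<le> b" "w \<in> U" "b \<le> w" using abc(3,4) by auto
        then show ?thesis unfolding Hull_def by blast
      qed
      show ?thesis by (rule sub_int[OF Ki _ conv]) auto
    qed
    have gd: "disjnt (K \<inter> Hull) (L \<inter> Hull)" if "K \<in> \<K>" "L \<in> \<K>" "K \<noteq> L" for K L
    proof -
      have "disjnt K L" using K(4) that unfolding pairwise_def by blast
      then show ?thesis unfolding disjnt_def by blast
    qed
    have gF: "disjnt (K \<inter> Hull) (I j)" if "K \<in> \<K>" "j \<in> F - G" for K j
    proof -
      have "\<forall>b\<in>I j. b \<notin> Hull" using outside[of j] that by blast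
      then show ?thesis unfolding disjnt_def by blast
    qed
    have "(\<Sum>K\<in>\<K>. (isum x ((\<lambda>K. K \<inter> Hull) K))\<^sup>2) \<le> (\<Sum>\<^sub>\<infinity>i\<in>G. (isum x (I i))\<^sup>2)"
      by (rule improve[OF J N GF K(2), where g = "\<lambda>K. K \<inter> Hull"]) (use gi gd gF in auto)
    then show ?thesis using K(1) isy unfolding f_def by simp
  qed
  have ne: "Jvals y \<noteq> {}" using Jvals_0 by blast
  have bdd: "bdd_above (Jvals y)" using upper unfolding bdd_above_def by blast
  have le1: "Sup (Jvals y) \<le> infsum f G" using cSup_least[OF ne] upper by blast
  have le2: "infsum f G \<le> Sup (Jvals y)"
  proof (rule infsum_le_finite_sums[OF sG])
    fix D assume D: "finite D" "D \<subseteq> G"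
    have DF: "D \<subseteq> F" using D GF by blast
    have eq: "isum y (I i) = isum x (I i)" if "i \<in> D" for i
    proof (rule isum_cong)
      show "restr y (I i) = restr x (I i)" using that D(2) by (auto simp: y_def U_def restr_def fun_eq_iff)
    qed
    have "(\<Sum>K\<in>I ` D. (isum y K)\<^sup>2) = (\<Sum>i\<in>D. (isum y (I i))\<^sup>2)"
      using sum.reindex[OF fam_inj[OF fam DF]] by simp
    also have "\<dots> = sum f D" unfolding f_def using eq by simp
    finally have "sum f D = (\<Sum>K\<in>I ` D. (isum y K)\<^sup>2)" by simp
    moreover have "(\<Sum>K\<in>I ` D. (isum y K)\<^sup>2) \<in> Jvals y"
      unfolding Jvals_def using D(1) fam_pairwise[OF fam DF] fam_int[OF fam] DF by blast
    ultimately show "sum f D \<le> Sup (Jvals y)" using cSup_upper[OF _ bdd] by simp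
  qed
  have eqS: "Sup (Jvals y) = infsum f G" using le1 le2 by simp
  have nn: "infsum f G \<ge> 0" unfolding f_def by (rule infsum_nonneg) simp
  show ?thesis unfolding Jnorm_def y_def[symmetric] U_def[symmetric] eqS[unfolded f_def]
    using nn unfolding f_def by simp
qed

theorem proposition3p5:
  fixes x :: "nat \<Rightarrow> real" and I :: "nat \<Rightarrow> nat set" and F :: "nat set"
  assumes "inJ x" and "norming x I F"
  shows "supp x \<subseteq> (\<Union>i\<in>F. I i)
    \<and> (\<forall>G. nat_interval G \<and> G \<subseteq> F \<longrightarrow>
           (\<Sum>\<^sub>\<infinity>i\<in>G. (isum x (I i))\<^sup>2) = (Jnorm (restr x (\<Union>i\<in>G. I i)))\<^sup>2)
    \<and> (\<forall>i\<in>F. \<forall>n\<in>I i \<inter> supp x.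
           isum x (I i) \<noteq> 0 \<and> isum x {m\<in>I i. m \<le> n} \<noteq> 0 \<and> isum x {m\<in>I i. n \<le> m} \<noteq> 0 \<and>
           sgn (isum x {m\<in>I i. m \<le> n}) = sgn (isum x (I i)) \<and>
           sgn (isum x {m\<in>I i. n \<le> m}) = sgn (isum x (I i)))
    \<and> (\<forall>i. i \<in> F \<and> i + 1 \<in> F \<longrightarrow> isum x (I i) * isum x (I (i + 1)) \<le> 0)
    \<and> (\<forall>i\<in>F. \<forall>n1 n2. n1 \<in> supp x \<and> n2 \<in> supp x \<and> n1 < n2 \<and>
           (\<forall>m. n1 < m \<and> m < n2 \<longrightarrow> m \<notin> supp x) \<and> x n1 * x n2 > 0 \<longrightarrow>
           {n1, n2} \<subseteq> I i \<or> {n1, n2} \<inter> I i = {})"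
proof -
  note J = assms(1) and N = assms(2)
  have P1: "supp x \<subseteq> (\<Union>i\<in>F. I i)" using part1[OF J N] .
  have P2: "\<forall>G. nat_interval G \<and> G \<subseteq> F \<longrightarrow>
           (\<Sum>\<^sub>\<infinity>i\<in>G. (isum x (I i))\<^sup>2) = (Jnorm (restr x (\<Union>i\<in>G. I i)))\<^sup>2"
    using part2[OF J N] by blast
  have P3: "\<forall>i\<in>F. \<forall>n\<in>I i \<inter> supp x.
           isum x (I i) \<noteq> 0 \<and> isum x {m\<in>I i. m \<le> n} \<noteq> 0 \<and> isum x {m\<in>I i. n \<le> m} \<noteq> 0 \<and>
           sgn (isum x {m\<in>I i. m \<le> n}) = sgn (isum x (I i)) \<and>
           sgn (isum x {m\<in>I i. n \<le> m}) = sgn (isum x (I i))"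
  proof (intro ballI)
    fix i n assume "i \<in> F" "n \<in> I i \<inter> supp x"
    then show "isum x (I i) \<noteq> 0 \<and> isum x {m\<in>I i. m \<le> n} \<noteq> 0 \<and> isum x {m\<in>I i. n \<le> m} \<noteq> 0 \<and>
           sgn (isum x {m\<in>I i. m \<le> n}) = sgn (isum x (I i)) \<and>
           sgn (isum x {m\<in>I i. n \<le> m}) = sgn (isum x (I i))"
      using part3[OF J N, of i n] by blast
  qed
  have P4: "\<forall>i. i \<in> F \<and> i + 1 \<in> F \<longrightarrow> isum x (I i) * isum x (I (i + 1)) \<le> 0"
    using part4[OF J N] by blast
  have P5: "\<forall>i\<in>F. \<forall>n1 n2. n1 \<in> supp x \<and> n2 \<in> supp x \<and> n1 < n2 \<and>
           (\<forall>m. n1 < m \<and> m < n2 \<longrightarrow> m \<notin> supp x) \<and> x n1 * x n2 > 0 \<longrightarrow>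
           {n1, n2} \<subseteq> I i \<or> {n1, n2} \<inter> I i = {}"
  proof (intro ballI allI impI)
    fix i n1 n2
    assume i: "i \<in> F" and H: "n1 \<in> supp x \<and> n2 \<in> supp x \<and> n1 < n2 \<and>
           (\<forall>m. n1 < m \<and> m < n2 \<longrightarrow> m \<notin> supp x) \<and> x n1 * x n2 > 0"
    show "{n1, n2} \<subseteq> I i \<or> {n1, n2} \<inter> I i = {}"
    proof (cases "n1 \<in> I i")
      case True
      show ?thesis
      proof (rule ccontr)
        assume "\<not> ?thesis"
        then have n2: "n2 \<notin> I i" using True by auto
        obtain q where q: "q \<in> F" "n2 \<in> I q" using P1 H by blast
        then have "q \<noteq> i" using n2 by auto
        then show False using part5core[OF J N i q(1) _ True q(2)] H by auto
      qed
    next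
      case False
      show ?thesis
      proof (rule ccontr)
        assume "\<not> ?thesis"
        then have n2: "n2 \<in> I i" using False by auto
        obtain p where p: "p \<in> F" "n1 \<in> I p" using P1 H by blast
        then have "p \<noteq> i" using False by auto
        then show False using part5core[OF J N p(1) i _ p(2) n2] H by auto
      qed
    qed
  qed
  show ?thesis using P1 P2 P3 P4 P5 by blast
qed

end
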